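(* Let $q$ be odd, $n\ge2$, $G=\mathbf{SL}_n(q)$, and let $u\in G$ be unipotent of type $(\lambda_1,\dots,\lambda_k)$ with $\lambda_1>2$. Then the conjugacy class $\mathcal{O}_u$ of $u$ in $G$ is of type D.
   Context: Unipotent type $(\lambda_1\ge\dots\ge\lambda_k)$ = sizes of Jordan blocks. Conjugacy classes are racks with $x\triangleright y=xyx^{-1}$. A subrack $Y$ is decomposable if $Y=R\sqcup S$ with nonempty subracks $R,S$, $Y\triangleright R=R$, $Y\triangleright S=S$. Type D: a decomposable subrack $R\sqcup S$ with $r\in R,s\in S$ and $r\triangleright(s\triangleright(r\triangleright s))\neq s$. *)

theory Defs
  imports "Jordan_Normal_Form.Jordan_Normal_Form"
begin

text \<open>A rack is given by a set X and an operation op (x |> y = op x y).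
  A subrack Y of X is a subset closed under the operation on which every
  left translation op x (x in Y) is a bijection of Y.\<close>

definition subrack :: "('m \<Rightarrow> 'm \<Rightarrow> 'm) \<Rightarrow> 'm set \<Rightarrow> 'm set \<Rightarrow> bool" where
  "subrack op X Y \<longleftrightarrow> Y \<subseteq> X \<and> (\<forall>x\<in>Y. op x ` Y = Y)"

definition decomposition :: "('m \<Rightarrow> 'm \<Rightarrow> 'm) \<Rightarrow> 'm set \<Rightarrow> 'm set \<Rightarrow> 'm set \<Rightarrow> bool" where
  "decomposition op Y R S \<longleftrightarrow>
     Y = R \<union> S \<and> R \<inter> S = {} \<and> R \<noteq> {} \<and> S \<noteq> {} \<and>
     subrack op Y R \<and> subrack op Y S \<and>
     (\<Union>y\<in>Y. op y ` R) = R \<and> (\<Union>y\<in>Y. op y ` S) = S"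

definition rack_type_D :: "('m \<Rightarrow> 'm \<Rightarrow> 'm) \<Rightarrow> 'm set \<Rightarrow> bool" where
  "rack_type_D op X \<longleftrightarrow>
     (\<exists>Y R S. subrack op X Y \<and> decomposition op Y R S \<and>
        (\<exists>r\<in>R. \<exists>s\<in>S. op r (op s (op r s)) \<noteq> s))"

definition SL_mat :: "nat \<Rightarrow> 'a :: field mat set" where
  "SL_mat n = {A \<in> carrier_mat n n. det A = 1}"

definition mat_inv :: "'a :: field mat \<Rightarrow> 'a mat" where
  "mat_inv A = (THE B. B \<in> carrier_mat (dim_row A) (dim_row A) \<and>
                        A * B = 1\<^sub>m (dim_row A) \<and> B * A = 1\<^sub>m (dim_row A))"

definition conj_mat :: "'a :: field mat \<Rightarrow> 'a mat \<Rightarrow> 'a mat" where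
  "conj_mat x y = x * y * mat_inv x"

definition conj_class_SL :: "nat \<Rightarrow> 'a :: field mat \<Rightarrow> 'a mat set" where
  "conj_class_SL n u = {conj_mat g u | g. g \<in> SL_mat n}"

definition unipotent_of_type :: "nat \<Rightarrow> 'a :: field mat \<Rightarrow> nat list \<Rightarrow> bool" where
  "unipotent_of_type n u lam \<longleftrightarrow>
     u \<in> carrier_mat n n \<and> lam \<noteq> [] \<and> sorted_wrt (\<ge>) lam \<and>
     jordan_nf u (map (\<lambda>l. (l, 1)) lam)"

end

theory Submission
  imports Defs
begin



definition UT :: "nat \<Rightarrow> 'a::field mat set" where
  "UT n = {A \<in> carrier_mat n n. \<forall>i<n. A$$(i,i) = 1 \<and> (\<forall>j<i. A$$(i,j) = 0)}"

lemma UT_carrier: "A \<in> UT n \<Longrightarrow> A \<in> carrier_mat n n" by (simp add: UT_def)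
lemma UT_diag: "A \<in> UT n \<Longrightarrow> i < n \<Longrightarrow> A $$ (i,i) = 1" by (simp add: UT_def)
lemma UT_low: "A \<in> UT n \<Longrightarrow> i < n \<Longrightarrow> j < i \<Longrightarrow> A $$ (i,j) = 0" by (simp add: UT_def)

lemma UT_sum: assumes A: "A \<in> UT n" and B: "B \<in> UT n" and ij: "i \<le> j" "j < n"
  shows "(A * B) $$ (i,j) = (\<Sum>k\<in>{i..j}. A $$ (i,k) * B $$ (k,j))"
proof -
  have c: "A \<in> carrier_mat n n" "B \<in> carrier_mat n n" using A B by (auto simp: UT_carrier)
  have "(A * B) $$ (i,j) = (\<Sum>k\<in>{0..<n}. A $$ (i,k) * B $$ (k,j))"
    using c ij by (simp add: scalar_prod_def)
  also have "\<dots> = (\<Sum>k\<in>{i..j}. A $$ (i,k) * B $$ (k,j))"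
  proof (rule sum.mono_neutral_right)
    show "finite {0..<n}" by simp
    show "{i..j} \<subseteq> {0..<n}" using ij by auto
    show "\<forall>k\<in>{0..<n} - {i..j}. A $$ (i, k) * B $$ (k, j) = 0"
    proof
      fix k assume k: "k \<in> {0..<n} - {i..j}"
      show "A $$ (i, k) * B $$ (k, j) = 0"
      proof (cases "k < i")
        case True then show ?thesis using UT_low[OF A, of i k] ij by simp
      next
        case False then have "j < k" using k by auto
        then show ?thesis using UT_low[OF B, of k j] k by simp
      qed
    qed
  qed
  finally show ?thesis .
qed

lemma UT_mult: assumes A: "A \<in> UT n" and B: "B \<in> UT n" shows "A * B \<in> UT n"
proof -
  have c: "A \<in> carrier_mat n n" "B \<in> carrier_mat n n" using A B by (auto simp: UT_carrier)
  have "(A * B) $$ (i,j) = 0" if "i < n" "j < i" for i j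
  proof -
    have "(A * B) $$ (i,j) = (\<Sum>k\<in>{0..<n}. A $$ (i,k) * B $$ (k,j))"
      using c that by (simp add: scalar_prod_def)
    also have "\<dots> = 0"
    proof (rule sum.neutral, rule)
      fix k assume "k \<in> {0..<n}"
      show "A $$ (i, k) * B $$ (k, j) = 0"
      proof (cases "k < i")
        case True then show ?thesis using UT_low[OF A, of i k] that by simp
      next
        case False then show ?thesis using UT_low[OF B, of k j] that \<open>k \<in> {0..<n}\<close> by simp
      qed
    qed
    finally show ?thesis .
  qed
  moreover have "(A * B) $$ (i,i) = 1" if "i < n" for i
    using UT_sum[OF A B, of i i] that UT_diag[OF A] UT_diag[OF B] by simp
  ultimately show ?thesis using c by (auto simp: UT_def)
qed

lemma UT_sup1: assumes A: "A \<in> UT n" and B: "B \<in> UT n" and i: "Suc i < n"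
  shows "(A * B) $$ (i, Suc i) = A $$ (i, Suc i) + B $$ (i, Suc i)"
proof -
  have "{i..Suc i} = {i, Suc i}" by auto
  then show ?thesis using UT_sum[OF A B, of i "Suc i"] i UT_diag[OF A] UT_diag[OF B] by simp
qed

lemma UT_sup2: assumes A: "A \<in> UT n" and B: "B \<in> UT n" and i: "Suc (Suc i) < n"
  shows "(A * B) $$ (i, Suc (Suc i)) = A $$ (i, Suc (Suc i)) + A $$ (i, Suc i) * B $$ (Suc i, Suc (Suc i)) + B $$ (i, Suc (Suc i))"
proof -
  have "{i..Suc (Suc i)} = {i, Suc i, Suc (Suc i)}" by auto
  then show ?thesis using UT_sum[OF A B, of i "Suc (Suc i)"] i UT_diag[OF A] UT_diag[OF B]
    by (simp add: algebra_simps)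
qed

lemma UT_one: "1\<^sub>m n \<in> UT n" by (auto simp: UT_def)

lemma UT_det: assumes A: "A \<in> UT n" shows "det A = 1"
proof -
  have "det A = prod_list (diag_mat A)"
    by (rule det_upper_triangular[of _ n]) (use A in \<open>auto simp: UT_def upper_triangular_def\<close>)
  also have "diag_mat A = replicate n 1" using A
    by (intro nth_equalityI) (auto simp: diag_mat_def UT_def)
  finally show ?thesis by simp
qed

lemma mat_inv_eq: assumes A: "A \<in> carrier_mat n n" and B: "B \<in> carrier_mat n n"
  and AB: "A * B = 1\<^sub>m n" and BA: "B * A = 1\<^sub>m n"
  shows "mat_inv A = B"
proof -
  have d: "dim_row A = n" using A by simp
  show ?thesis unfolding mat_inv_def d
  proof (rule the_equality)
    show "B \<in> carrier_mat n n \<and> A * B = 1\<^sub>m n \<and> B * A = 1\<^sub>m n" using B AB BA by simp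
  next
    fix C assume C: "C \<in> carrier_mat n n \<and> A * C = 1\<^sub>m n \<and> C * A = 1\<^sub>m n"
    from C have Cc: "C \<in> carrier_mat n n" by simp
    have "C = C * (A * B)" using Cc AB by simp
    also have "\<dots> = (C * A) * B" using A B Cc by (simp add: assoc_mult_mat[of C n n A n B n])
    also have "\<dots> = B" using C B by simp
    finally show "C = B" .
  qed
qed

lemma SL_inv: assumes A: "A \<in> SL_mat n"
  shows "mat_inv A \<in> SL_mat n" "A * mat_inv A = 1\<^sub>m n" "mat_inv A * A = 1\<^sub>m n"
proof -
  have Ac: "A \<in> carrier_mat n n" and dA: "det A = 1" using A by (auto simp: SL_mat_def)
  let ?B = "adj_mat A"
  have B: "?B \<in> carrier_mat n n" "A * ?B = 1\<^sub>m n" "?B * A = 1\<^sub>m n" using adj_mat[OF Ac] dA by auto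
  have e: "mat_inv A = ?B" by (rule mat_inv_eq[OF Ac B])
  have "det A * det ?B = 1" using det_mult[OF Ac B(1)] B(2) by simp
  then have "det ?B = 1" using dA by simp
  then show "mat_inv A \<in> SL_mat n" using e B by (simp add: SL_mat_def)
  show "A * mat_inv A = 1\<^sub>m n" "mat_inv A * A = 1\<^sub>m n" using e B by auto
qed

lemma SL_carrier: "A \<in> SL_mat n \<Longrightarrow> A \<in> carrier_mat n n" by (simp add: SL_mat_def)

lemma SL_mult: assumes "A \<in> SL_mat n" "B \<in> SL_mat n" shows "A * B \<in> SL_mat n"
  using assms det_mult[of A n B] by (auto simp: SL_mat_def)

lemma SL_one: "1\<^sub>m n \<in> SL_mat n" by (simp add: SL_mat_def)

lemma UT_SL: "A \<in> UT n \<Longrightarrow> A \<in> SL_mat n" using UT_det UT_carrier by (auto simp: SL_mat_def)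

lemma mat_inv_mult: assumes A: "A \<in> SL_mat n" and B: "B \<in> SL_mat n"
  shows "mat_inv (A * B) = mat_inv B * mat_inv A"
proof -
  note Ac = SL_carrier[OF A] and Bc = SL_carrier[OF B]
  note Ai = SL_inv[OF A] and Bi = SL_inv[OF B]
  have Aic: "mat_inv A \<in> carrier_mat n n" and Bic: "mat_inv B \<in> carrier_mat n n"
    using Ai(1) Bi(1) SL_carrier by auto
  show ?thesis
  proof (rule mat_inv_eq[of _ n])
    show "A * B \<in> carrier_mat n n" using Ac Bc by simp
    show "mat_inv B * mat_inv A \<in> carrier_mat n n" using Aic Bic by simp
    have "A * B * (mat_inv B * mat_inv A) = A * (B * mat_inv B) * mat_inv A"
      using Ac Bc Aic Bic by (simp add: assoc_mult_mat[of _ n n _ n _ n])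
    also have "\<dots> = 1\<^sub>m n" using Bi(2) Ai(2) Ac by simp
    finally show "A * B * (mat_inv B * mat_inv A) = 1\<^sub>m n" .
    have "mat_inv B * mat_inv A * (A * B) = mat_inv B * (mat_inv A * A) * B"
      using Ac Bc Aic Bic by (simp add: assoc_mult_mat[of _ n n _ n _ n])
    also have "\<dots> = 1\<^sub>m n" using Bi(3) Ai(3) Bic by simp
    finally show "mat_inv B * mat_inv A * (A * B) = 1\<^sub>m n" .
  qed
qed

lemma conj_comp: assumes x: "x \<in> SL_mat n" and y: "y \<in> SL_mat n" and z: "z \<in> carrier_mat n n"
  shows "conj_mat x (conj_mat y z) = conj_mat (x * y) z"
proof -
  note xc = SL_carrier[OF x] and yc = SL_carrier[OF y]
  have xi: "mat_inv x \<in> carrier_mat n n" and yi: "mat_inv y \<in> carrier_mat n n"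
    using SL_inv(1)[OF x] SL_inv(1)[OF y] SL_carrier by auto
  show ?thesis unfolding conj_mat_def mat_inv_mult[OF x y]
    using xc yc xi yi z by (simp add: assoc_mult_mat[of _ n n _ n _ n])
qed

lemma conj_carrier: "x \<in> SL_mat n \<Longrightarrow> z \<in> carrier_mat n n \<Longrightarrow> conj_mat x z \<in> carrier_mat n n"
  using SL_inv(1)[of x n] SL_carrier[of x n] SL_carrier[of "mat_inv x" n] by (simp add: conj_mat_def)

lemma conj_one: assumes "z \<in> carrier_mat n n" shows "conj_mat (1\<^sub>m n) z = z"
proof -
  have "mat_inv (1\<^sub>m n) = (1\<^sub>m n :: 'a :: field mat)" by (rule mat_inv_eq) auto
  then show ?thesis using assms by (simp add: conj_mat_def)
qed

lemma finite_carrier: "finite (carrier_mat n n :: 'a::finite mat set)"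
proof -
  have "carrier_mat n n \<subseteq> (\<lambda>f. mat n n f) ` (({0..<n}\<times>{0..<n}) \<rightarrow>\<^sub>E (UNIV::'a set))"
  proof
    fix A :: "'a mat" assume A: "A \<in> carrier_mat n n"
    have "A = mat n n (restrict (\<lambda>ij. A $$ ij) ({0..<n}\<times>{0..<n}))"
      using A by (intro eq_matI) auto
    moreover have "restrict (\<lambda>ij. A $$ ij) ({0..<n}\<times>{0..<n}) \<in> ({0..<n}\<times>{0..<n}) \<rightarrow>\<^sub>E UNIV" by simp
    ultimately show "A \<in> (\<lambda>f. mat n n f) ` (({0..<n}\<times>{0..<n}) \<rightarrow>\<^sub>E UNIV)" by blast
  qed
  moreover have "finite (({0..<n}\<times>{0..<n}) \<rightarrow>\<^sub>E (UNIV::'a set))" by (intro finite_PiE) auto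
  ultimately show ?thesis using finite_subset by blast
qed

lemma UT_inv: assumes A: "(A :: 'a :: {finite,field} mat) \<in> UT n" shows "mat_inv A \<in> UT n"
proof -
  note Ac = UT_carrier[OF A] and AS = UT_SL[OF A]
  have fin: "finite (UT n :: 'a mat set)" by (rule finite_subset[OF _ finite_carrier[of n]]) (auto simp: UT_def)
  have sub: "(\<lambda>x. A * x) ` UT n \<subseteq> UT n" using UT_mult[OF A] by auto
  have inj: "inj_on (\<lambda>x. A * x) (UT n)"
  proof
    fix x y assume x: "x \<in> UT n" and y: "y \<in> UT n" and e: "A * x = A * y"
    have xc: "x \<in> carrier_mat n n" and yc: "y \<in> carrier_mat n n" using x y UT_carrier by auto
    have ic: "mat_inv A \<in> carrier_mat n n" using SL_inv(1)[OF AS] SL_carrier by auto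
    have "x = (mat_inv A * A) * x" using SL_inv(3)[OF AS] xc by simp
    also have "\<dots> = mat_inv A * (A * x)" using ic Ac xc by (simp add: assoc_mult_mat[of _ n n _ n _ n])
    also have "\<dots> = mat_inv A * (A * y)" using e by simp
    also have "\<dots> = (mat_inv A * A) * y" using ic Ac yc by (simp add: assoc_mult_mat[of _ n n _ n _ n])
    also have "\<dots> = y" using SL_inv(3)[OF AS] yc by simp
    finally show "x = y" .
  qed
  have "(\<lambda>x. A * x) ` UT n = UT n" by (rule endo_inj_surj[OF fin sub inj])
  then obtain B where B: "B \<in> UT n" "A * B = 1\<^sub>m n" using UT_one[of n] by (metis imageE)
  have Bc: "B \<in> carrier_mat n n" using B UT_carrier by auto
  have "B * A = 1\<^sub>m n" by (rule mat_mult_left_right_inverse[OF Ac Bc B(2)])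
  then have "mat_inv A = B" using mat_inv_eq[OF Ac Bc B(2)] by simp
  then show ?thesis using B by simp
qed



lemma jm_diag: "\<forall>p\<in>set nas. snd p = (1::'a::field) \<Longrightarrow> i < sum_list (map fst nas) \<Longrightarrow> jordan_matrix nas $$ (i,i) = 1"
proof (induction nas arbitrary: i)
  case Nil then show ?case by simp
next
  case (Cons p nas)
  obtain l a where p: "p = (l,a)" by (cases p)
  have a: "a = 1" using Cons.prems p by auto
  show ?case
  proof (cases "i < l")
    case True then show ?thesis using Cons.prems p a by (simp add: jordan_matrix_Cons)
  next
    case False
    have "jordan_matrix nas $$ (i - l, i - l) = 1" using Cons False p by auto
    then show ?thesis using Cons.prems p False by (simp add: jordan_matrix_Cons)
  qed
qed

lemma jm_first: assumes "l \<ge> 3"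
  shows "jordan_matrix ((l,a)#nas) $$ (0, Suc 0) = 1"
    "jordan_matrix ((l,a)#nas) $$ (Suc 0, Suc (Suc 0)) = 1"
    "jordan_matrix ((l,a)#nas) $$ (0, Suc (Suc 0)) = 0"
  using assms by (simp_all add: jordan_matrix_Cons)

lemma even_invol: "finite A \<Longrightarrow> (\<forall>x\<in>A. f x \<in> A \<and> f x \<noteq> x \<and> f (f x) = x) \<Longrightarrow> even (card A)"
proof (induction "card A" arbitrary: A rule: less_induct)
  case less
  show ?case
  proof (cases "A = {}")
    case True then show ?thesis by simp
  next
    case False
    then obtain x where x: "x \<in> A" by auto
    let ?B = "A - {x, f x}"
    have fx: "f x \<in> A" "f x \<noteq> x" using less.prems x by auto
    have s2: "{x, f x} \<subseteq> A" "card {x, f x} = 2" using x fx by auto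
    have "card {x, f x} \<le> card A" using card_mono[OF less.prems(1) s2(1)] .
    then have cB: "card A = card ?B + 2" using less.prems(1) s2
      by (simp add: card_Diff_subset finite_subset)
    have "\<forall>y\<in>?B. f y \<in> ?B \<and> f y \<noteq> y \<and> f (f y) = y"
    proof
      fix y assume y: "y \<in> ?B"
      have i: "f y \<in> A" "f y \<noteq> y" "f (f y) = y" using less.prems y by auto
      have "f x \<noteq> y" using y by auto
      have "f (f x) = x" using less.prems x by auto
      have "f y \<noteq> x" using i \<open>f x \<noteq> y\<close> by metis
      moreover have "f y \<noteq> f x"
      proof
        assume "f y = f x"
        then have "f (f y) = f (f x)" by simp
        then show False using i \<open>f (f x) = x\<close> y by auto
      qed
      ultimately show "f y \<in> ?B \<and> f y \<noteq> y \<and> f (f y) = y" using i by auto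
    qed
    then have "even (card ?B)" using less cB by auto
    then show ?thesis using cB by simp
  qed
qed

lemma two_ne_zero: assumes "odd (card (UNIV :: 'a::{finite,field} set))" shows "(2::'a) \<noteq> 0"
proof
  assume h: "(2::'a) = 0"
  have "\<forall>x\<in>(UNIV::'a set). x + 1 \<in> UNIV \<and> x + 1 \<noteq> x \<and> x + 1 + 1 = x"
    using h by (simp add: add.assoc)
  then have "even (card (UNIV::'a set))" by (intro even_invol[where f = "\<lambda>x. x + 1"]) auto
  then show False using assms by simp
qed


definition dg :: "nat \<Rightarrow> (nat \<Rightarrow> 'a::field) \<Rightarrow> 'a mat" where
  "dg n d = mat n n (\<lambda>(i,j). if i = j then d i else 0)"

lemma dg_carrier[simp]: "dg n d \<in> carrier_mat n n" unfolding dg_def by auto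

lemma dg_dim[simp]: "dim_row (dg n d) = n" "dim_col (dg n d) = n" unfolding dg_def by auto

lemma dg_index: "i < n \<Longrightarrow> j < n \<Longrightarrow> dg n d $$ (i,j) = (if i = j then d i else 0)"
  unfolding dg_def by simp

lemma dg_left: assumes "A \<in> carrier_mat n n" "i < n" "j < n"
  shows "(dg n d * A) $$ (i,j) = d i * A $$ (i,j)"
proof -
  have "(dg n d * A) $$ (i,j) = (\<Sum>k\<in>{0..<n}. (if i = k then d i else 0) * A $$ (k,j))"
    using assms by (simp add: dg_def scalar_prod_def)
  also have "\<dots> = (\<Sum>k\<in>{0..<n}. if i = k then d i * A $$ (k,j) else 0)"
    by (rule sum.cong) auto
  also have "\<dots> = d i * A $$ (i,j)" using assms by simp
  finally show ?thesis .
qed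

lemma dg_right: assumes "A \<in> carrier_mat n n" "i < n" "j < n"
  shows "(A * dg n d) $$ (i,j) = A $$ (i,j) * d j"
proof -
  have "(A * dg n d) $$ (i,j) = (\<Sum>k\<in>{0..<n}. A $$ (i,k) * (if k = j then d k else 0))"
    using assms by (simp add: dg_def scalar_prod_def)
  also have "\<dots> = (\<Sum>k\<in>{0..<n}. if k = j then A $$ (i,k) * d j else 0)"
    by (rule sum.cong) auto
  also have "\<dots> = A $$ (i,j) * d j" using assms by simp
  finally show ?thesis .
qed

lemma dg_mult: "dg n d * dg n e = dg n (\<lambda>i. d i * e i)"
proof (rule eq_matI)
  fix i j assume "i < dim_row (dg n (\<lambda>i. d i * e i))" "j < dim_col (dg n (\<lambda>i. d i * e i))"
  then have ij: "i < n" "j < n" by auto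
  have "(dg n d * dg n e) $$ (i,j) = d i * dg n e $$ (i,j)" by (rule dg_left[OF dg_carrier ij])
  then show "(dg n d * dg n e) $$ (i,j) = dg n (\<lambda>i. d i * e i) $$ (i,j)" using ij by (simp add: dg_index)
qed auto

lemma dg_one: "(\<And>i. i < n \<Longrightarrow> d i = 1) \<Longrightarrow> dg n d = 1\<^sub>m n"
  by (rule eq_matI) (auto simp: dg_index)

lemma det_dg: "det (dg n d) = prod d {0..<n}"
proof -
  have "det (dg n d) = prod_list (diag_mat (dg n d))"
    by (rule det_upper_triangular[of _ n]) (auto simp: dg_def upper_triangular_def)
  also have "diag_mat (dg n d) = map d [0..<n]" by (auto simp: diag_mat_def dg_def)
  finally show ?thesis by (simp add: prod.distinct_set_conv_list[symmetric])
qed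

definition orb :: "nat \<Rightarrow> 'a::field mat \<Rightarrow> 'a mat set" where
  "orb n z = {conj_mat g z | g. g \<in> UT n}"

lemma orb_UT: assumes z: "(z :: 'a :: {finite,field} mat) \<in> UT n" shows "orb n z \<subseteq> UT n"
proof
  fix y assume "y \<in> orb n z"
  then obtain g where g: "g \<in> UT n" "y = conj_mat g z" by (auto simp: orb_def)
  show "y \<in> UT n" unfolding g(2) conj_mat_def
    by (intro UT_mult UT_inv g(1) z)
qed

lemma orb_img: assumes x: "(x :: 'a :: {finite,field} mat) \<in> UT n" and z: "z \<in> carrier_mat n n"
  shows "conj_mat x ` orb n z = orb n z"
proof
  show "conj_mat x ` orb n z \<subseteq> orb n z"
  proof
    fix y assume "y \<in> conj_mat x ` orb n z"
    then obtain g where g: "g \<in> UT n" "y = conj_mat x (conj_mat g z)" by (auto simp: orb_def)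
    have "y = conj_mat (x * g) z" using conj_comp[OF UT_SL[OF x] UT_SL[OF g(1)] z] g by simp
    moreover have "x * g \<in> UT n" using UT_mult[OF x g(1)] .
    ultimately show "y \<in> orb n z" by (auto simp: orb_def)
  qed
  show "orb n z \<subseteq> conj_mat x ` orb n z"
  proof
    fix y assume "y \<in> orb n z"
    then obtain g where g: "g \<in> UT n" "y = conj_mat g z" by (auto simp: orb_def)
    let ?h = "mat_inv x * g"
    have h: "?h \<in> UT n" using UT_mult[OF UT_inv[OF x] g(1)] .
    have xc: "x \<in> carrier_mat n n" and gc: "g \<in> carrier_mat n n" and xic: "mat_inv x \<in> carrier_mat n n"
      using x g(1) UT_inv[OF x] UT_carrier by auto
    have "x * ?h = (x * mat_inv x) * g" using xc gc xic by (simp add: assoc_mult_mat[of _ n n _ n _ n])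
    also have "\<dots> = g" using SL_inv(2)[OF UT_SL[OF x]] gc by simp
    finally have "x * ?h = g" .
    then have "conj_mat x (conj_mat ?h z) = y" using conj_comp[OF UT_SL[OF x] UT_SL[OF h] z] g by simp
    moreover have "conj_mat ?h z \<in> orb n z" using h by (auto simp: orb_def)
    ultimately show "y \<in> conj_mat x ` orb n z" by (metis imageI)
  qed
qed

lemma orb_sup: assumes g: "(g :: 'a :: {finite,field} mat) \<in> UT n" and z: "z \<in> UT n" and i: "Suc i < n"
  shows "conj_mat g z $$ (i, Suc i) = z $$ (i, Suc i)"
proof -
  have gi: "mat_inv g \<in> UT n" using UT_inv[OF g] .
  have "conj_mat g z $$ (i, Suc i) = g $$ (i, Suc i) + z $$ (i, Suc i) + mat_inv g $$ (i, Suc i)"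
    unfolding conj_mat_def using UT_sup1[OF UT_mult[OF g z] gi i] UT_sup1[OF g z i] by simp
  moreover have "(g * mat_inv g) $$ (i, Suc i) = g $$ (i, Suc i) + mat_inv g $$ (i, Suc i)"
    using UT_sup1[OF g gi i] .
  moreover have "(g * mat_inv g) $$ (i, Suc i) = 0" using SL_inv(2)[OF UT_SL[OF g]] i by simp
  ultimately show ?thesis by (simp add: algebra_simps)
qed

lemma orb_mem: "z \<in> carrier_mat n n \<Longrightarrow> z \<in> orb n z"
  using conj_one[of z n] UT_one[of n] unfolding orb_def by force



theorem mainTheorem9:
  fixes u :: "'a :: {finite, field} mat" and n :: nat and lam :: "nat list"
  assumes "odd (card (UNIV :: 'a set))"
    and "n \<ge> 2"
    and "u \<in> SL_mat n"
    and "unipotent_of_type n u lam"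
    and "lam ! 0 > 2"
  shows "rack_type_D conj_mat (conj_class_SL n u)"
proof -
  have two: "(2::'a) \<noteq> 0" using two_ne_zero[OF assms(1)] .
  define nas where "nas = map (\<lambda>l. (l, 1::'a)) lam"
  define J where "J = jordan_matrix nas"
  have uc: "u \<in> carrier_mat n n" and lne: "lam \<noteq> []" and jnf: "jordan_nf u nas"
    using assms(4) by (auto simp: unipotent_of_type_def nas_def)
  from jnf have "similar_mat u J" by (simp add: jordan_nf_def J_def)
  then obtain m P Q where PQ: "{u,J,P,Q} \<subseteq> carrier_mat m m" "P * Q = 1\<^sub>m m" "Q * P = 1\<^sub>m m" "u = P * J * Q"
    using similar_matD by blast
  have mn: "m = n" using PQ(1) uc by auto
  have Jc: "J \<in> carrier_mat n n" and Pc: "P \<in> carrier_mat n n" and Qc: "Q \<in> carrier_mat n n"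
    using PQ(1) mn by auto
  have PQ1: "P * Q = 1\<^sub>m n" "Q * P = 1\<^sub>m n" using PQ mn by auto
  obtain l rest where lam: "lam = l # rest" using lne by (cases lam) auto
  have l3: "l \<ge> 3" using assms(5) lam by simp
  have "dim_row J = sum_list lam" by (simp add: J_def nas_def comp_def)
  then have nsum: "n = sum_list lam" using Jc by simp
  have n3: "3 \<le> n" using nsum lam l3 by simp
  have Jdiag: "J $$ (i,i) = 1" if "i < n" for i
    unfolding J_def by (rule jm_diag) (use that nsum in \<open>auto simp: nas_def comp_def\<close>)
  have Jlow: "J $$ (i,j) = 0" if "i < n" "j < i" for i j
    unfolding J_def by (rule jordan_matrix_upper_triangular) (use that nsum in \<open>auto simp: nas_def comp_def\<close>)
  have Jnas: "J = jordan_matrix ((l,1) # map (\<lambda>l. (l, 1::'a)) rest)" by (simp add: J_def nas_def lam)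
  have J01: "J $$ (0, Suc 0) = 1" and J12: "J $$ (Suc 0, Suc (Suc 0)) = 1" and J02: "J $$ (0, Suc (Suc 0)) = 0"
    unfolding Jnas using jm_first[OF l3] by auto

  define \<delta> where "\<delta> = det P"
  have "det P * det Q = 1" using det_mult[OF Pc Qc] PQ1(1) by simp
  then have d0: "\<delta> \<noteq> 0" by (auto simp: \<delta>_def)
  have dQ: "det Q = inverse \<delta>" using \<open>det P * det Q = 1\<close> d0 unfolding \<delta>_def
    by (metis inverse_unique mult.commute)
  define md where "md = (\<lambda>i::nat. if i = 0 then \<delta> else 1)"
  define mi where "mi = (\<lambda>i::nat. if i = 0 then inverse \<delta> else 1)"
  define ed where "ed = (\<lambda>i::nat. if i < 2 then -1 else (1::'a))"
  define M where "M = dg n md"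
  define Mi where "Mi = dg n mi"
  define E where "E = dg n ed"
  have Mc: "M \<in> carrier_mat n n" and Mic: "Mi \<in> carrier_mat n n" and Ec: "E \<in> carrier_mat n n"
    by (auto simp: M_def Mi_def E_def)
  have MMi: "M * Mi = 1\<^sub>m n"
    unfolding M_def Mi_def dg_mult by (rule dg_one) (auto simp: md_def mi_def d0)
  have MiM: "Mi * M = 1\<^sub>m n"
    unfolding M_def Mi_def dg_mult by (rule dg_one) (auto simp: md_def mi_def d0)
  have EE: "E * E = 1\<^sub>m n"
    unfolding E_def dg_mult by (rule dg_one) (auto simp: ed_def)
  have detM: "det M = \<delta>" unfolding M_def det_dg md_def using n3 by (simp add: prod.delta)
  have detE: "det E = 1"
  proof -
    have "det E = prod ed {0..<n}" unfolding E_def det_dg ..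
    also have "\<dots> = prod ed {0, 1}"
      by (rule prod.mono_neutral_right) (use n3 in \<open>auto simp: ed_def\<close>)
    also have "\<dots> = 1" by (simp add: ed_def)
    finally show ?thesis .
  qed
  have ESL: "E \<in> SL_mat n" using Ec detE by (simp add: SL_mat_def)
  have Einv: "mat_inv E = E" using mat_inv_eq[OF Ec Ec EE EE] .
  define g0 where "g0 = M * Q"
  have g0c: "g0 \<in> carrier_mat n n" using Mc Qc by (simp add: g0_def)
  have g0SL: "g0 \<in> SL_mat n" using det_mult[OF Mc Qc] detM dQ d0 g0c by (simp add: SL_mat_def g0_def)
  have QPX: "Q * (P * X) = X" if "X \<in> carrier_mat n n" for X
    using that Qc Pc PQ1(2) by (simp add: assoc_mult_mat[of _ n n _ n _ n, symmetric])
  have PQX: "P * (Q * X) = X" if "X \<in> carrier_mat n n" for X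
    using that Qc Pc PQ1(1) by (simp add: assoc_mult_mat[of _ n n _ n _ n, symmetric])
  have MMiX: "Mi * (M * X) = X" if "X \<in> carrier_mat n n" for X
    using that Mc Mic MiM by (simp add: assoc_mult_mat[of _ n n _ n _ n, symmetric])
  have g0inv: "mat_inv g0 = P * Mi"
  proof (rule mat_inv_eq[OF g0c])
    show "P * Mi \<in> carrier_mat n n" using Pc Mic by simp
    show "g0 * (P * Mi) = 1\<^sub>m n" unfolding g0_def using Mc Qc Pc Mic QPX MMi
      by (simp add: assoc_mult_mat[of _ n n _ n _ n])
    show "P * Mi * g0 = 1\<^sub>m n" unfolding g0_def using Mc Qc Pc Mic MMiX PQ1(1)
      by (simp add: assoc_mult_mat[of _ n n _ n _ n])
  qed
  define r where "r = conj_mat g0 u"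
  have r_eq: "r = M * J * Mi"
    unfolding r_def conj_mat_def g0inv unfolding g0_def PQ(4) using Mc Qc Pc Mic Jc QPX
    by (simp add: assoc_mult_mat[of _ n n _ n _ n])
  have rc: "r \<in> carrier_mat n n" using r_eq Mc Jc Mic by simp
  have r_ent: "r $$ (i,j) = md i * J $$ (i,j) * mi j" if "i < n" "j < n" for i j
  proof -
    have "(dg n md * J * dg n mi) $$ (i,j) = (dg n md * J) $$ (i,j) * mi j"
      by (rule dg_right) (use Jc that in auto)
    also have "(dg n md * J) $$ (i,j) = md i * J $$ (i,j)" by (rule dg_left[OF Jc that])
    finally show ?thesis unfolding r_eq M_def Mi_def .
  qed
  have rUT: "r \<in> UT n"
    using rc by (auto simp: UT_def r_ent Jdiag Jlow md_def mi_def d0)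
  have r01: "r $$ (0, Suc 0) = \<delta>" and r12: "r $$ (Suc 0, Suc (Suc 0)) = 1"
    using n3 by (auto simp: r_ent J01 J12 md_def mi_def)
  define s where "s = conj_mat E r"
  have s_eq: "s = E * r * E" unfolding s_def conj_mat_def Einv ..
  have sc: "s \<in> carrier_mat n n" using s_eq Ec rc by simp
  have s_ent: "s $$ (i,j) = ed i * r $$ (i,j) * ed j" if "i < n" "j < n" for i j
  proof -
    have "(dg n ed * r * dg n ed) $$ (i,j) = (dg n ed * r) $$ (i,j) * ed j"
      by (rule dg_right) (use rc that in auto)
    also have "(dg n ed * r) $$ (i,j) = ed i * r $$ (i,j)" by (rule dg_left[OF rc that])
    finally show ?thesis unfolding s_eq E_def .
  qed
  have sUT: "s \<in> UT n"
    using sc rUT by (auto simp: UT_def s_ent ed_def)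
  have s01: "s $$ (0, Suc 0) = \<delta>" and s12: "s $$ (Suc 0, Suc (Suc 0)) = -1"
    using n3 by (auto simp: s_ent r01 r12 ed_def)
  have s_u: "s = conj_mat (E * g0) u" unfolding s_def r_def using conj_comp[OF ESL g0SL uc] .

  define R where "R = orb n r"
  define S where "S = orb n s"
  define Y where "Y = R \<union> S"
  define X where "X = conj_class_SL n u"
  have YUT: "Y \<subseteq> UT n" unfolding Y_def R_def S_def using orb_UT[OF rUT] orb_UT[OF sUT] by auto
  have RX: "R \<subseteq> X"
  proof
    fix y assume "y \<in> R"
    then obtain g where g: "g \<in> UT n" "y = conj_mat g r" by (auto simp: R_def orb_def)
    have "y = conj_mat (g * g0) u" unfolding g(2) r_def using conj_comp[OF UT_SL[OF g(1)] g0SL uc] .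
    moreover have "g * g0 \<in> SL_mat n" using SL_mult[OF UT_SL[OF g(1)] g0SL] .
    ultimately show "y \<in> X" by (auto simp: X_def conj_class_SL_def)
  qed
  have SX: "S \<subseteq> X"
  proof
    fix y assume "y \<in> S"
    then obtain g where g: "g \<in> UT n" "y = conj_mat g s" by (auto simp: S_def orb_def)
    have "y = conj_mat (g * (E * g0)) u" unfolding g(2) s_u
      using conj_comp[OF UT_SL[OF g(1)] SL_mult[OF ESL g0SL] uc] .
    moreover have "g * (E * g0) \<in> SL_mat n" using SL_mult[OF UT_SL[OF g(1)] SL_mult[OF ESL g0SL]] .
    ultimately show "y \<in> X" by (auto simp: X_def conj_class_SL_def)
  qed
  have imR: "conj_mat x ` R = R" if "x \<in> Y" for x
    unfolding R_def using orb_img[of x n r] that YUT rc by auto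
  have imS: "conj_mat x ` S = S" if "x \<in> Y" for x
    unfolding S_def using orb_img[of x n s] that YUT sc by auto
  have imY: "conj_mat x ` Y = Y" if "x \<in> Y" for x
    unfolding Y_def image_Un using imR[OF that] imS[OF that] by simp
  have rR: "r \<in> R" unfolding R_def using orb_mem[OF rc] .
  have sS: "s \<in> S" unfolding S_def using orb_mem[OF sc] .
  have Rsup: "y $$ (Suc 0, Suc (Suc 0)) = 1" if yin: "y \<in> R" for y
  proof -
    obtain g where g: "g \<in> UT n" "y = conj_mat g r" using yin by (auto simp: R_def orb_def)
    show ?thesis using orb_sup[OF g(1) rUT, of "Suc 0"] n3 r12 g(2) by simp
  qed
  have Ssup: "y $$ (Suc 0, Suc (Suc 0)) = -1" if yin: "y \<in> S" for y
  proof -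
    obtain g where g: "g \<in> UT n" "y = conj_mat g s" using yin by (auto simp: S_def orb_def)
    show ?thesis using orb_sup[OF g(1) sUT, of "Suc 0"] n3 s12 g(2) by simp
  qed
  have m1: "(1::'a) \<noteq> -1"
  proof
    assume "(1::'a) = -1"
    then have "(2::'a) = 0" by (metis add_eq_0_iff one_add_one)
    then show False using two by simp
  qed
  have RS: "R \<inter> S = {}" using Rsup Ssup m1 by fastforce
  have rS: "r \<in> SL_mat n" "s \<in> SL_mat n" using UT_SL rUT sUT by auto
  have notD: "conj_mat r (conj_mat s (conj_mat r s)) \<noteq> s"
  proof
    assume h: "conj_mat r (conj_mat s (conj_mat r s)) = s"
    define w where "w = r * (s * r)"
    have wUT: "w \<in> UT n" unfolding w_def by (intro UT_mult rUT sUT)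
    have wSL: "w \<in> SL_mat n" using UT_SL[OF wUT] .
    have wc: "w \<in> carrier_mat n n" using UT_carrier[OF wUT] .
    have "conj_mat r (conj_mat s (conj_mat r s)) = conj_mat w s"
      unfolding w_def using conj_comp[OF rS(2) rS(1) sc] conj_comp[OF rS(1) SL_mult[OF rS(2) rS(1)] sc]
      by simp
    then have cw: "conj_mat w s = s" using h by simp
    have wic: "mat_inv w \<in> carrier_mat n n" using SL_inv(1)[OF wSL] SL_carrier by auto
    have "s * w = conj_mat w s * w" using cw by simp
    also have "\<dots> = w * s * (mat_inv w * w)" unfolding conj_mat_def using wc wic sc
      by (simp add: assoc_mult_mat[of _ n n _ n _ n])
    also have "\<dots> = w * s" using SL_inv(3)[OF wSL] wc sc by simp
    finally have comm: "s * w = w * s" .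
    have n2: "Suc (Suc 0) < n" and n1: "Suc 0 < n" using n3 by auto
    have sr: "s * r \<in> UT n" using UT_mult[OF sUT rUT] .
    have w01: "w $$ (0, Suc 0) = 3 * \<delta>"
      unfolding w_def using UT_sup1[OF rUT sr, of 0] UT_sup1[OF sUT rUT, of 0] n1 r01 s01 by simp
    have w12: "w $$ (Suc 0, Suc (Suc 0)) = 1"
      unfolding w_def using UT_sup1[OF rUT sr, of "Suc 0"] UT_sup1[OF sUT rUT, of "Suc 0"] n2 r12 s12 by simp
    have "(s * w) $$ (0, Suc (Suc 0)) = (w * s) $$ (0, Suc (Suc 0))" using comm by simp
    then have "s $$ (0, Suc 0) * w $$ (Suc 0, Suc (Suc 0)) = w $$ (0, Suc 0) * s $$ (Suc 0, Suc (Suc 0))"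
      using UT_sup2[OF sUT wUT, of 0] UT_sup2[OF wUT sUT, of 0] n2 by (simp add: algebra_simps)
    then have "\<delta> = - (3 * \<delta>)" using w01 w12 s01 s12 by simp
    then have "2 * 2 * \<delta> = 0" by (simp add: algebra_simps)
    then show False using two d0 by (metis mult_eq_0_iff)
  qed
  show ?thesis
    unfolding rack_type_D_def
  proof (intro exI conjI)
    show "subrack conj_mat (conj_class_SL n u) Y"
      unfolding subrack_def X_def[symmetric] Y_def using RX SX imY Y_def by auto
    show "decomposition conj_mat Y R S"
      unfolding decomposition_def subrack_def
      using RS rR sS imR imS Y_def by auto
    show "\<exists>r\<in>R. \<exists>s\<in>S. conj_mat r (conj_mat s (conj_mat r s)) \<noteq> s"
      using rR sS notD by blast
  qed
qed


end
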